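(* Let $1\le n\le N-1$ and $Z_n=\frac1n\sum_{t=1}^n (X_t-\mu)$. For every $\lambda>0$, \[ \log \mathbb E \exp(\lambda n Z_n)\le \frac{(b-a)^2}{8}\,\lambda^2 (n+1)\Big(1-\frac nN\Big). \]
   Context: Let $N\ge 2$ and let $\mathcal X=(x_1,\dots,x_N)$ be a finite population of real numbers (repetitions allowed). Let $(X_1,\dots,X_N)=(x_{\pi(1)},\dots,x_{\pi(N)})$, where $\pi$ is a uniformly random permutation of $\{1,\dots,N\}$. For $n\le N$, $(X_1,\dots,X_n)$ is therefore a sample of size $n$ drawn uniformly without replacement from $\mathcal X$. Let $\mu=\frac1N\sum_{i=1}^N x_i$, $a=\min_i x_i$ and $b=\max_i x_i$. *)

theory Defs
  imports "HOL-Probability.Probability" "HOL-Combinatorics.Permutations"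
begin

definition unif_perm :: "nat \<Rightarrow> (nat \<Rightarrow> nat) pmf" where
  "unif_perm N = pmf_of_set {p. p permutes {..<N}}"

end

theory Submission
  imports Defs
begin

lemma hoeff_fin:
  fixes z :: "'a \<Rightarrow> real"
  assumes J: "finite J" and s: "s \<ge> 0" and zr: "\<And>j. j\<in>J \<Longrightarrow> z j \<in> {l..u}"
    and z0: "(\<Sum>j\<in>J. z j) = 0"
  shows "(\<Sum>j\<in>J. exp (s * z j)) \<le> card J * exp (s^2*(u-l)^2/8)"
proof (cases "l < 0 \<and> 0 < u")
  case False
  have "\<forall>j\<in>J. z j = 0"
  proof (cases "l \<ge> 0")
    case True
    then have "\<forall>j\<in>J. z j \<ge> 0" using zr by force
    then show ?thesis using sum_nonneg_eq_0_iff[OF J] z0 by blast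
  next
    case f2: False
    then have "u \<le> 0" using False by auto
    then have "\<forall>j\<in>J. - z j \<ge> 0" using zr by force
    moreover have "(\<Sum>j\<in>J. - z j) = 0" using z0 by (simp add: sum_negf)
    ultimately show ?thesis using sum_nonneg_eq_0_iff[OF J, of "\<lambda>j. - z j"] by auto
  qed
  then have "(\<Sum>j\<in>J. exp (s * z j)) = card J" by simp
  also have "\<dots> \<le> card J * exp (s^2*(u-l)^2/8)"
    using mult_left_mono[of 1 "exp (s^2*(u-l)^2/8)" "real (card J)"] by simp
  finally show ?thesis .
next
  case True
  then have lu: "l < 0" "0 < u" "l < u" by auto
  have pt: "exp (s * z j) \<le> (u - z j) / (u - l) * exp (s * l) + (z j - l) / (u - l) * exp (s * u)"
    if j: "j \<in> J" for j
  proof -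
    define y where "y = (u - z j) / (u - l)"
    have y: "y \<in> {0..1}" using zr[OF j] lu by (auto simp: y_def)
    have yy: "y * (u - l) = u - z j" using lu by (simp add: y_def)
    have "(1 - y) *\<^sub>R u + y *\<^sub>R l = u - y * (u - l)" by (simp add: algebra_simps)
    also have "\<dots> = z j" using yy by simp
    finally have "(1 - y) *\<^sub>R u + y *\<^sub>R l = z j" .
    note cc = this
    have "exp (s * ((1 - y) *\<^sub>R u + y *\<^sub>R l)) \<le> (1 - y) * exp (s * u) + y * exp (s * l)"
      using y s by (intro convex_onD[OF convex_on_exp]) auto
    also note cc
    also have "1 - y = (z j - l) / (u - l)"
      using lu by (simp add: field_simps y_def)
    finally show ?thesis by (simp add: y_def)
  qed
  have "(\<Sum>j\<in>J. exp (s * z j)) \<le> (\<Sum>j\<in>J. (u - z j) / (u - l) * exp (s * l) + (z j - l) / (u - l) * exp (s * u))"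
    by (rule sum_mono) (rule pt)
  also have "\<dots> = (\<Sum>j\<in>J. (u * exp (s * l) - l * exp (s * u)) / (u - l)
                    + z j * ((exp (s * u) - exp (s * l)) / (u - l)))"
    using lu by (intro sum.cong refl) (simp add: divide_simps, simp add: algebra_simps)
  also have "\<dots> = card J * ((u * exp (s * l) - l * exp (s * u)) / (u - l))"
  proof -
    have "(\<Sum>j\<in>J. z j * ((exp (s * u) - exp (s * l)) / (u - l))) = 0"
      by (simp add: sum_distrib_right[symmetric] z0 del: times_divide_eq_right)
    then show ?thesis by (simp add: sum.distrib del: times_divide_eq_right)
  qed
  also have "(u * exp (s * l) - l * exp (s * u)) / (u - l) \<le> exp (s^2*(u-l)^2/8)"
  proof -
    define p where "p = - l / (u - l)"
    define h where "h = s * (u - l)"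
    have p: "p \<ge> 0" using lu by (simp add: p_def divide_nonpos_pos)
    have h: "h \<ge> 0" using lu s by (simp add: h_def)
    have pos: "1 + p * (exp h - 1) > 0"
    proof -
      have "exp h \<ge> 1" using h by simp
      then have "p * (exp h - 1) \<ge> 0" using p by simp
      then show ?thesis by linarith
    qed
    have eq: "(u * exp (s * l) - l * exp (s * u)) / (u - l) = exp (-h * p + ln (1 + p * (exp h - 1)))"
    proof -
      have "exp (-h * p + ln (1 + p * (exp h - 1))) = exp (s * l) * (1 + p * (exp h - 1))"
      proof -
        have hp: "-h * p = s * l" using lu by (simp add: h_def p_def)
        show ?thesis using pos by (simp only: exp_add hp exp_ln)
      qed
      also have "\<dots> = exp (s * l) * (u / (u - l)) + (- l / (u - l)) * (exp (s * l) * exp h)"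
      proof -
        have ne: "u - l \<noteq> 0" using lu by simp
        show ?thesis unfolding p_def using ne
          by (simp add: divide_simps) (simp add: algebra_simps)
      qed
      also have "exp (s * l) * exp h = exp (s * u)"
        by (simp add: h_def flip: exp_add) (simp add: algebra_simps)
      finally have X: "exp (-h * p + ln (1 + p * (exp h - 1))) = exp (s * l) * (u / (u - l)) + - l / (u - l) * exp (s * u)" .
      have ne: "u - l \<noteq> 0" using lu by simp
      have "(u * exp (s * l) - l * exp (s * u)) / (u - l) = exp (s * l) * (u / (u - l)) + - l / (u - l) * exp (s * u)"
        using ne by (simp add: divide_simps)
      then show ?thesis using X by simp
    qed
    have "-h * p + ln (1 + p * (exp h - 1)) \<le> h^2/8"
      by (rule Hoeffdings_lemma_aux[OF h p])
    then have "exp (-h * p + ln (1 + p * (exp h - 1))) \<le> exp (h^2/8)" by simp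
    then show ?thesis using eq by (simp add: h_def power_mult_distrib)
  qed
  then have "card J * ((u * exp (s * l) - l * exp (s * u)) / (u - l)) \<le> card J * exp (s^2*(u-l)^2/8)"
    by (intro mult_left_mono) auto
  finally show ?thesis .
qed

lemma sq_sum_bound:
  assumes "1 \<le> n" "n \<le> M"
  shows "(\<Sum>i\<in>{n..<M}. 1 / (real i)^2) \<le> (real n + 1) / real n * (1 / real n - 1 / real M)"
  using assms(2)
proof (induction M rule: dec_induct)
  case base then show ?case by simp
next
  case (step M)
  have Mp: "real M \<ge> real n" "real n \<ge> 1" using step assms by auto
  have key: "1 / (real M)^2 \<le> (real n + 1) / real n * (1 / real M - 1 / (real M + 1))"
  proof -
    have "(real n + 1) / real n * (1 / real M - 1 / (real M + 1)) = (real n + 1) / (real n * real M * (real M + 1))"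
      using Mp by (simp add: field_simps)
    moreover have "real n * real M * (real M + 1) \<le> (real n + 1) * (real M)^2"
      using Mp by (simp add: power2_eq_square algebra_simps)
    moreover have "1 / (real M)^2 \<le> (real n + 1) / (real n * real M * (real M + 1))"
      using Mp calculation(2) by (simp add: divide_simps)
    ultimately show ?thesis by simp
  qed
  have "(\<Sum>i\<in>{n..<Suc M}. 1 / (real i)^2) = (\<Sum>i\<in>{n..<M}. 1 / (real i)^2) + 1 / (real M)^2"
    using step by simp
  also have "\<dots> \<le> (real n + 1) / real n * (1 / real n - 1 / real M) + (real n + 1) / real n * (1 / real M - 1 / (real M + 1))"
    using step key by linarith
  also have "\<dots> = (real n + 1) / real n * (1 / real n - 1 / real (Suc M))"
    by (simp add: algebra_simps)
  finally show ?case .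
qed

lemma step_pt:
  fixes y :: "nat \<Rightarrow> real"
  assumes k: "k \<ge> 1" and c: "c \<ge> 0" and yr: "\<And>t. t < Suc k \<Longrightarrow> y t \<in> {l..u}"
  shows "(\<Sum>j<Suc k. exp (c * ((\<Sum>t<Suc k. y t) - y j) / real k))
     \<le> real (Suc k) * (exp (c * (\<Sum>t<Suc k. y t) / real (Suc k)) * exp (c^2*(u-l)^2/8 * (1 / (real k)^2)))"
proof -
  define T where "T = (\<Sum>t<Suc k. y t)"
  define z where "z = (\<lambda>j. T / real (Suc k) - y j)"
  have kp: "real k > 0" using k by simp
  have eq: "exp (c * (T - y j) / real k) = exp (c * T / real (Suc k)) * exp ((c / real k) * z j)" for j
  proof -
    have "c * (T - y j) / real k = c * T / real (Suc k) + (c / real k) * z j"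
      using kp unfolding z_def of_nat_Suc
      apply (simp add: divide_simps add_pos_pos)
      apply (simp add: algebra_simps)
      done
    then show ?thesis by (simp add: exp_add)
  qed
  have zs: "(\<Sum>j<Suc k. z j) = 0"
    by (simp add: z_def sum_subtractf T_def)
  have zr: "z j \<in> {T / real (Suc k) - u .. T / real (Suc k) - l}" if "j \<in> {..<Suc k}" for j
    using yr[of j] that by (auto simp: z_def)
  have "(\<Sum>j<Suc k. exp ((c / real k) * z j)) \<le> card {..<Suc k} * exp ((c / real k)^2 * ((T / real (Suc k) - l) - (T / real (Suc k) - u))^2 / 8)"
    by (rule hoeff_fin[OF _ _ zr zs]) (use c kp in auto)
  also have "(c / real k)^2 * ((T / real (Suc k) - l) - (T / real (Suc k) - u))^2 / 8 = c^2*(u-l)^2/8 * (1 / (real k)^2)"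
    by (simp add: power_divide)
  finally have H: "(\<Sum>j<Suc k. exp ((c / real k) * z j)) \<le> real (Suc k) * exp (c^2*(u-l)^2/8 * (1 / (real k)^2))"
    by simp
  have "(\<Sum>j<Suc k. exp (c * (T - y j) / real k)) = exp (c * T / real (Suc k)) * (\<Sum>j<Suc k. exp ((c / real k) * z j))"
    by (simp only: eq sum_distrib_left[symmetric])
  also have "\<dots> \<le> exp (c * T / real (Suc k)) * (real (Suc k) * exp (c^2*(u-l)^2/8 * (1 / (real k)^2)))"
    by (rule mult_left_mono[OF H]) simp
  finally show ?thesis unfolding T_def by (simp add: algebra_simps)
qed

lemma perm_shift:
  fixes g :: "nat \<Rightarrow> real"
  assumes "j \<le> k"
  shows "(\<Sum>t<k. g (\<pi> (Transposition.transpose j k t))) = (\<Sum>t<Suc k. g (\<pi> t)) - g (\<pi> j)"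
proof -
  have p: "Transposition.transpose j k permutes {..<Suc k}" using assms by (intro permutes_swap_id) auto
  have "(\<Sum>t<Suc k. g (\<pi> t)) = (\<Sum>t<Suc k. ((\<lambda>t. g (\<pi> t)) \<circ> Transposition.transpose j k) t)"
    by (rule sum.permute[OF p])
  also have "\<dots> = (\<Sum>t<k. g (\<pi> (Transposition.transpose j k t))) + g (\<pi> j)"
    by simp
  finally show ?thesis by simp
qed

theorem proposition4:
  fixes N n :: nat and x :: "nat \<Rightarrow> real" and lam :: real
  assumes "N \<ge> 2" and "1 \<le> n" and "n \<le> N - 1" and "lam > 0"
  defines "\<mu> \<equiv> (\<Sum>i<N. x i) / real N"
      and "a \<equiv> Min (x ` {..<N})"
      and "b \<equiv> Max (x ` {..<N})"
  shows "ln (measure_pmf.expectation (unif_perm N)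
            (\<lambda>\<pi>. exp (lam * real n * ((1 / real n) * (\<Sum>t<n. x (\<pi> t) - \<mu>)))))
         \<le> (b - a)^2 / 8 * lam^2 * (real n + 1) * (1 - real n / real N)"
proof -
  define P where "P = {p. p permutes {..<N}}"
  have Pfin: "finite P" unfolding P_def by (rule finite_permutations) simp
  have Pne: "P \<noteq> {}" unfolding P_def using permutes_id by blast
  have cP: "real (card P) > 0" using Pfin Pne by (simp add: card_gt_0_iff)
  define y where "y = (\<lambda>i. x i - \<mu>)"
  define S :: "nat \<Rightarrow> (nat \<Rightarrow> nat) \<Rightarrow> real" where "S = (\<lambda>k \<pi>. \<Sum>t<k. y (\<pi> t))"
  define c where "c = lam * real n"
  have c0: "c \<ge> 0" using assms by (simp add: c_def)
  define D where "D = c^2*((b-\<mu>)-(a-\<mu>))^2/8"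
  have D0: "D \<ge> 0" by (simp add: D_def)
  define E :: "nat \<Rightarrow> real" where "E = (\<lambda>k. \<Sum>\<pi>\<in>P. exp (c * S k \<pi> / real k))"
  have Epos: "E k > 0" for k unfolding E_def using Pfin Pne by (intro sum_pos) auto
  have yr: "y (\<pi> t) \<in> {a - \<mu> .. b - \<mu>}" if "\<pi> \<in> P" "t < N" for \<pi> t
  proof -
    have "\<pi> t \<in> {..<N}" using that unfolding P_def using permutes_in_image[of \<pi> "{..<N}" t] by simp
    then have "x (\<pi> t) \<in> x ` {..<N}" by blast
    then have "a \<le> x (\<pi> t) \<and> x (\<pi> t) \<le> b" unfolding a_def b_def by simp
    then show ?thesis by (simp add: y_def)
  qed
  have stepE: "E k \<le> E (Suc k) * exp (D * (1 / (real k)^2))" if k1: "1 \<le> k" and kN: "k < N" for k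
  proof -
    have "E k = (\<Sum>\<pi>\<in>P. exp (c * (S (Suc k) \<pi> - y (\<pi> j)) / real k))" if j: "j < Suc k" for j
    proof -
      have tp: "Transposition.transpose j k permutes {..<N}" using j kN by (intro permutes_swap_id) auto
      have "E k = (\<Sum>\<pi>\<in>P. exp (c * S k (\<pi> \<circ> Transposition.transpose j k) / real k))"
        unfolding E_def P_def by (rule sum_permutations_compose_right[OF tp])
      also have "\<dots> = (\<Sum>\<pi>\<in>P. exp (c * (S (Suc k) \<pi> - y (\<pi> j)) / real k))"
        using j by (intro sum.cong refl) (simp add: S_def perm_shift)
      finally show ?thesis .
    qed
    then have "(\<Sum>j<Suc k. \<Sum>\<pi>\<in>P. exp (c * (S (Suc k) \<pi> - y (\<pi> j)) / real k)) = (\<Sum>j<Suc k. E k)"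
      by (intro sum.cong refl) simp
    then have "real (Suc k) * E k = (\<Sum>j<Suc k. \<Sum>\<pi>\<in>P. exp (c * (S (Suc k) \<pi> - y (\<pi> j)) / real k))"
      by (simp del: of_nat_Suc)
    also have "\<dots> = (\<Sum>\<pi>\<in>P. \<Sum>j<Suc k. exp (c * (S (Suc k) \<pi> - y (\<pi> j)) / real k))"
      by (rule sum.swap)
    also have "\<dots> \<le> (\<Sum>\<pi>\<in>P. real (Suc k) * (exp (c * S (Suc k) \<pi> / real (Suc k)) * exp (D * (1 / (real k)^2))))"
    proof (rule sum_mono)
      fix \<pi> assume p: "\<pi> \<in> P"
      show "(\<Sum>j<Suc k. exp (c * (S (Suc k) \<pi> - y (\<pi> j)) / real k))
            \<le> real (Suc k) * (exp (c * S (Suc k) \<pi> / real (Suc k)) * exp (D * (1 / (real k)^2)))"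
        unfolding S_def D_def
        by (rule step_pt[OF k1 c0]) (use yr[OF p] kN in auto)
    qed
    also have "\<dots> = real (Suc k) * (E (Suc k) * exp (D * (1 / (real k)^2)))"
      by (simp add: E_def sum_distrib_left sum_distrib_right)
    finally show ?thesis by (simp del: of_nat_Suc)
  qed
  have EN: "E N = card P"
  proof -
    have "S N \<pi> = 0" if p: "\<pi> \<in> P" for \<pi>
    proof -
      have pp: "\<pi> permutes {..<N}" using p by (simp add: P_def)
      have "(\<Sum>t<N. x (\<pi> t)) = (\<Sum>i<N. x i)"
        using sum.permute[OF pp, of x] by simp
      moreover have "real N * \<mu> = (\<Sum>i<N. x i)" using assms(1) by (simp add: \<mu>_def)
      ultimately show ?thesis by (simp add: S_def y_def sum_subtractf)
    qed
    then show ?thesis by (simp add: E_def)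
  qed
  have ind: "n \<le> m \<longrightarrow> E m \<le> card P * exp (D * (\<Sum>i\<in>{m..<N}. 1 / (real i)^2))" if "m \<le> N" for m
    using that
  proof (induction m rule: inc_induct)
    case base then show ?case by (simp add: EN)
  next
    case (step m)
    show ?case
    proof
      assume nm: "n \<le> m"
      have "E m \<le> E (Suc m) * exp (D * (1 / (real m)^2))"
        using step.hyps assms(2) nm by (intro stepE) auto
      also have "\<dots> \<le> card P * exp (D * (\<Sum>i\<in>{Suc m..<N}. 1 / (real i)^2)) * exp (D * (1 / (real m)^2))"
        using step.IH nm by (intro mult_right_mono) auto
      also have "\<dots> = card P * exp (D * (\<Sum>i\<in>{m..<N}. 1 / (real i)^2))"
        using step.hyps by (simp add: sum.atLeast_Suc_lessThan exp_add[symmetric] algebra_simps)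
      finally show "E m \<le> card P * exp (D * (\<Sum>i\<in>{m..<N}. 1 / (real i)^2))" .
    qed
  qed
  have Eb: "E n \<le> card P * exp (D * (\<Sum>i\<in>{n..<N}. 1 / (real i)^2))"
    using ind[of n] assms by auto
  have exq: "measure_pmf.expectation (pmf_of_set P)
            (\<lambda>\<pi>. exp (lam * real n * ((1 / real n) * (\<Sum>t<n. x (\<pi> t) - \<mu>)))) = E n / card P"
    unfolding integral_pmf_of_set[OF Pne Pfin] E_def S_def y_def c_def by simp
  have "ln (E n / card P) \<le> ln (exp (D * (\<Sum>i\<in>{n..<N}. 1 / (real i)^2)))"
    using Eb Epos cP by (subst ln_le_cancel_iff) (auto simp: field_simps)
  also have "\<dots> = D * (\<Sum>i\<in>{n..<N}. 1 / (real i)^2)" by simp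
  also have "\<dots> \<le> D * ((real n + 1) / real n * (1 / real n - 1 / real N))"
    by (rule mult_left_mono[OF sq_sum_bound D0]) (use assms in auto)
  also have "\<dots> = (b - a)^2 / 8 * lam^2 * (real n + 1) * (1 - real n / real N)"
    using assms by (simp add: D_def c_def field_simps power2_eq_square)
  finally show ?thesis using exq by (simp add: P_def unif_perm_def)
qed

end
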